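(* Let $X$ be a scalar random variable with samples $x$ and distribution $\pi$. Let $f:\mathbb{R}\to\mathbb{R}$ and let $Y = f(X)$, a scalar random variable with samples $y = f(x)$ and distribution $\pi_Y$, have an upper bound $u_b \in \mathbb{R}$ such that $\mathbb{P}_{\pi_Y}[Y \leq u_b] = 1$. Let $x_1,\dots,x_N$ be $N$ independent samples of $X$, set $y_k = f(x_k)$, and let $\zeta^*_N$ be the solution of $\min_{\zeta\in\mathbb{R}} \zeta$ subject to $\zeta \ge y_i$ for all $i = 1,\dots,N$ (i.e. $\zeta^*_N = \max_k f(x_k)$). Then for every $\epsilon\in[0,1]$, \[ \mathbb{P}^N_{\pi}\left[\mathbb{E}_{\pi}[f(X)] \leq \zeta^*_N(1-\epsilon) + u_b\epsilon\right] \geq 1-(1-\epsilon)^N. \]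
   Context: $\mathbb{P}^N_{\pi}$ denotes the $N$-fold product probability measure governing the i.i.d. sample $(x_1,\dots,x_N)$ drawn from $\pi$. *)

theory Defs
  imports "HOL-Probability.Probability"
begin

end

theory Submission
  imports Defs
begin

theorem corollary1:
  fixes \<pi> :: "real measure" and f :: "real \<Rightarrow> real" and u\<^sub>b :: real
    and N :: nat and \<epsilon> :: real
  assumes "prob_space \<pi>"
    and "sets \<pi> = sets borel"
    and "f \<in> borel_measurable \<pi>"
    and "integrable \<pi> f"
    and "AE x in \<pi>. f x \<le> u\<^sub>b"
    and "0 \<le> \<epsilon>" and "\<epsilon> \<le> 1"
  shows "measure (\<Pi>\<^sub>M i\<in>{..<N}. \<pi>)
           {xs \<in> space (\<Pi>\<^sub>M i\<in>{..<N}. \<pi>).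
              (\<integral>x. f x \<partial>\<pi>) \<le> Max ((\<lambda>k. f (xs k)) ` {..<N}) * (1 - \<epsilon>) + u\<^sub>b * \<epsilon>}
         \<ge> 1 - (1 - \<epsilon>) ^ N"
proof -
  interpret pi: prob_space \<pi> by fact
  interpret P: finite_product_prob_space "\<lambda>_. \<pi>" "{..<N}"
    by unfold_locales (auto intro: assms(1))
  let ?P = "\<Pi>\<^sub>M i\<in>{..<N}. \<pi>"
  define m where "m = (\<integral>x. f x \<partial>\<pi>)"
  define S where "S = {xs \<in> space ?P. m \<le> Max ((\<lambda>k. f (xs k)) ` {..<N}) * (1 - \<epsilon>) + u\<^sub>b * \<epsilon>}"
  have mu: "m \<le> u\<^sub>b"
  proof -
    have "m \<le> (\<integral>x. u\<^sub>b \<partial>\<pi>)" unfolding m_def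
      by (rule integral_mono_AE) (use assms(4,5) in auto)
    thus ?thesis by (simp add: pi.prob_space)
  qed
  have P1: "measure ?P (space ?P) = 1"
    by (rule prob_space.prob_space, rule prob_space_PiM, rule assms(1))
  show ?thesis
  proof (cases "\<epsilon> = 1 \<or> N = 0")
    case True
    then show ?thesis
    proof
      assume "\<epsilon> = 1"
      hence "S = space ?P" using mu unfolding S_def by auto
      thus ?thesis unfolding S_def[symmetric] m_def[symmetric] using \<open>\<epsilon> = 1\<close> by (simp add: P1)
    next
      assume "N = 0" thus ?thesis by simp
    qed
  next
    case False
    hence e1: "\<epsilon> < 1" and N: "N > 0" using assms(7) by auto
    define t where "t = (m - u\<^sub>b * \<epsilon>) / (1 - \<epsilon>)"
    have tm: "t * (1 - \<epsilon>) + u\<^sub>b * \<epsilon> = m" unfolding t_def using e1 by (simp add: field_simps)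
    have tu: "t \<le> u\<^sub>b" unfolding t_def using e1 mu by (simp add: field_simps)
    define A where "A = {x \<in> space \<pi>. f x < t}"
    have A: "A \<in> sets \<pi>" unfolding A_def using assms(3) by measurable
    define q where "q = measure \<pi> A"
    have q: "q \<le> 1 - \<epsilon>"
    proof (rule ccontr)
      assume "\<not> q \<le> 1 - \<epsilon>"
      hence qg: "q > 1 - \<epsilon>" by simp
      define g where "g x = u\<^sub>b + (t - u\<^sub>b) * indicator A x" for x
      have gi: "integrable \<pi> g" unfolding g_def using A by (intro Bochner_Integration.integrable_add integrable_mult_right) (auto simp: pi.emeasure_eq_measure)
      have "m < integral\<^sup>L \<pi> g" unfolding m_def
      proof (rule pi.integral_less_AE[where A=A])
        show "emeasure \<pi> A \<noteq> 0" using qg assms(7) unfolding q_def pi.emeasure_eq_measure by auto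
        show "AE x in \<pi>. x \<in> A \<longrightarrow> f x \<noteq> g x" by (auto simp: A_def g_def)
        show "AE x in \<pi>. f x \<le> g x" using assms(5) by eventually_elim (auto simp: A_def g_def indicator_def)
      qed (use assms(4) gi A in auto)
      also have "integral\<^sup>L \<pi> g = u\<^sub>b + (t - u\<^sub>b) * q" unfolding g_def q_def
      proof -
        have i1: "integrable \<pi> (\<lambda>x. (t - u\<^sub>b) * indicator A x :: real)"
          using A by (intro integrable_mult_right) (simp add: pi.emeasure_eq_measure)
        have "(\<integral>x. u\<^sub>b + (t - u\<^sub>b) * indicator A x \<partial>\<pi>) = (\<integral>x. u\<^sub>b \<partial>\<pi>) + (\<integral>x. (t - u\<^sub>b) * indicator A x \<partial>\<pi>)"
          by (rule Bochner_Integration.integral_add[OF _ i1]) simp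
        also have "(\<integral>x. (t - u\<^sub>b) * indicator A x \<partial>\<pi>) = (t - u\<^sub>b) * measure \<pi> A"
          using A by (simp add: pi.emeasure_eq_measure)
        finally show "(\<integral>x. u\<^sub>b + (t - u\<^sub>b) * indicator A x \<partial>\<pi>) = u\<^sub>b + (t - u\<^sub>b) * measure \<pi> A"
          by (simp add: pi.prob_space)
      qed
      also have "\<dots> \<le> u\<^sub>b + (t - u\<^sub>b) * (1 - \<epsilon>)" using tu qg
        by (intro add_left_mono mult_left_mono_neg) auto
      also have "\<dots> = m" using tm by (simp add: algebra_simps)
      finally show False by simp
    qed
    have SE: "S = space ?P - (\<Pi>\<^sub>E i\<in>{..<N}. A)"
    proof (intro set_eqI iffI)
      fix xs assume "xs \<in> S"
      hence xs: "xs \<in> space ?P" and le: "m \<le> Max ((\<lambda>k. f (xs k)) ` {..<N}) * (1 - \<epsilon>) + u\<^sub>b * \<epsilon>"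
        unfolding S_def by auto
      have "t \<le> Max ((\<lambda>k. f (xs k)) ` {..<N})"
      proof -
        have "t * (1 - \<epsilon>) \<le> Max ((\<lambda>k. f (xs k)) ` {..<N}) * (1 - \<epsilon>)" using le tm by linarith
        thus ?thesis using e1 by (simp add: mult_le_cancel_right)
      qed
      then obtain k where k: "k < N" "t \<le> f (xs k)" using N
        by (subst (asm) Max_ge_iff) auto
      have "xs \<notin> (\<Pi>\<^sub>E i\<in>{..<N}. A)"
      proof
        assume "xs \<in> (\<Pi>\<^sub>E i\<in>{..<N}. A)"
        hence "xs k \<in> A" using k(1) by (auto simp: PiE_iff)
        thus False using k(2) unfolding A_def by simp
      qed
      thus "xs \<in> space ?P - (\<Pi>\<^sub>E i\<in>{..<N}. A)" using xs by blast
    next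
      fix xs assume "xs \<in> space ?P - (\<Pi>\<^sub>E i\<in>{..<N}. A)"
      hence xs: "xs \<in> space ?P" and nA: "xs \<notin> (\<Pi>\<^sub>E i\<in>{..<N}. A)" by auto
      have "\<forall>i<N. xs i \<in> space \<pi>" using xs by (auto simp: space_PiM)
      with nA obtain k where k: "k < N" "\<not> f (xs k) < t" using xs
        by (auto simp: A_def space_PiM PiE_iff)
      hence "t \<le> Max ((\<lambda>k. f (xs k)) ` {..<N})"
        by (intro Max_ge_iff[THEN iffD2]) (auto intro!: bexI[of _ k] simp: not_less)
      hence "t * (1 - \<epsilon>) \<le> Max ((\<lambda>k. f (xs k)) ` {..<N}) * (1 - \<epsilon>)"
        using e1 by (intro mult_right_mono) auto
      thus "xs \<in> S" using xs tm unfolding S_def by auto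
    qed
    have PA: "measure ?P (\<Pi>\<^sub>E i\<in>{..<N}. A) = q ^ N"
      using P.finite_measure_PiM_emb[of "\<lambda>_. A"] A by (simp add: q_def)
    have "measure ?P S = 1 - q ^ N"
      unfolding SE using P.prob_compl[of "\<Pi>\<^sub>E i\<in>{..<N}. A"] A PA
      by (simp add: sets_PiM_I_finite)
    moreover have "q ^ N \<le> (1 - \<epsilon>) ^ N"
      by (intro power_mono q) (simp add: q_def)
    ultimately show ?thesis unfolding S_def m_def by simp
  qed
qed

end
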